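(* Consider Picard's case of the sixth Painlevé equation, $\ddot q=\frac12\left(\frac1q+\frac1{q-1}+\frac1{q-t}\right)\dot q^2-\left(\frac1t+\frac1{t-1}+\frac1{q-t}\right)\dot q+\frac{q(q-1)(q-t)}{t^2(t-1)^2}\cdot\frac12\cdot\frac{t(t-1)}{(q-t)^2}$ (i.e. $\alpha=\beta=\gamma=0$, $\delta=\frac12$). Parametrize the independent variable by $s\in\mathbb C$ via $t=\frac{s^3(s+2)}{2s+1}$. Then the transformation $(q,t)\mapsto(\tilde q,\tilde t)$, $$\tilde t=\frac{s(s+2)^3}{(2s+1)^3},\qquad \tilde q=\frac{q\,(q+s(s+2))^2}{((2s+1)q+s^2)^2},$$ preserves this equation: if $q(t)$ is a solution, then $\tilde q$, regarded as a function of $\tilde t$, is again a solution of the same equation. *)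

theory Defs
  imports "HOL-Complex_Analysis.Complex_Analysis"
begin

definition PVI_rhs :: "complex \<Rightarrow> complex \<Rightarrow> complex \<Rightarrow> complex \<Rightarrow> complex \<Rightarrow> complex \<Rightarrow> complex \<Rightarrow> complex" where
  "PVI_rhs \<alpha> \<beta> \<gamma> \<delta> t q p =
     1/2 * (1/q + 1/(q - 1) + 1/(q - t)) * p^2
     - (1/t + 1/(t - 1) + 1/(q - t)) * p
     + q * (q - 1) * (q - t) / (t^2 * (t - 1)^2)
       * (\<alpha> + \<beta> * t / q^2 + \<gamma> * (t - 1) / (q - 1)^2 + \<delta> * t * (t - 1) / (q - t)^2)"

definition PVI_solution_on ::
  "complex \<Rightarrow> complex \<Rightarrow> complex \<Rightarrow> complex \<Rightarrow> (complex \<Rightarrow> complex) \<Rightarrow> complex set \<Rightarrow> bool" where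
  "PVI_solution_on \<alpha> \<beta> \<gamma> \<delta> f V \<longleftrightarrow>
     open V \<and> f holomorphic_on V \<and>
     (\<forall>t\<in>V. t \<noteq> 0 \<and> t \<noteq> 1 \<and> f t \<noteq> 0 \<and> f t \<noteq> 1 \<and> f t \<noteq> t \<and>
        deriv (deriv f) t = PVI_rhs \<alpha> \<beta> \<gamma> \<delta> t (f t) (deriv f t))"

abbreviation Picard_solution_on :: "(complex \<Rightarrow> complex) \<Rightarrow> complex set \<Rightarrow> bool" where
  "Picard_solution_on f V \<equiv> PVI_solution_on 0 0 0 (1/2) f V"

definition t_of_s :: "complex \<Rightarrow> complex" where
  "t_of_s s = s^3 * (s + 2) / (2 * s + 1)"

definition tt_of_s :: "complex \<Rightarrow> complex" where
  "tt_of_s s = s * (s + 2)^3 / (2 * s + 1)^3"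

definition qt_of :: "complex \<Rightarrow> complex \<Rightarrow> complex" where
  "qt_of s q = q * (q + s*(s + 2))^2 / ((2 * s + 1) * q + s^2)^2"

end

theory Submission
  imports Defs
begin
definition pNN :: "complex \<Rightarrow> complex \<Rightarrow> complex \<Rightarrow> complex" where
  "pNN s x p = (6 * s^10 * p - 12 * s^9 * x * p + 36 * s^9 * p - 54 * s^8 * x * p + 78 * s^8 * p - 96 * s^7 * x * p + 72 * s^7 * p + 18 * s^6 * x^2 * p + 16 * s^6 * x^2 - 102 * s^6 * x * p - 16 * s^6 * x + 24 * s^6 * p + 12 * s^5 * x^3 * p + 36 * s^5 * x^2 * p + 48 * s^5 * x^2 - 72 * s^5 * x * p - 48 * s^5 * x + 30 * s^4 * x^3 * p + 18 * s^4 * x^2 * p + 36 * s^4 * x^2 - 24 * s^4 * x * p - 36 * s^4 * x + 24 * s^3 * x^3 * p - 32 * s^3 * x^3 + 40 * s^3 * x^2 - 8 * s^3 * x - 16 * s^2 * x^4 + 6 * s^2 * x^3 * p - 16 * s^2 * x^3 + 32 * s^2 * x^2 - 16 * s * x^4 + 8 * s * x^3 + 8 * s * x^2 - 4 * x^4 + 4 * x^3)"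

definition pNS :: "complex \<Rightarrow> complex \<Rightarrow> complex \<Rightarrow> complex" where
  "pNS s x p = (60 * s^9 * p - 108 * s^8 * x * p + 324 * s^8 * p - 432 * s^7 * x * p + 624 * s^7 * p - 672 * s^6 * x * p + 504 * s^6 * p + 108 * s^5 * x^2 * p + 96 * s^5 * x^2 - 612 * s^5 * x * p - 96 * s^5 * x + 144 * s^5 * p + 60 * s^4 * x^3 * p + 180 * s^4 * x^2 * p + 240 * s^4 * x^2 - 360 * s^4 * x * p - 240 * s^4 * x + 120 * s^3 * x^3 * p + 72 * s^3 * x^2 * p + 144 * s^3 * x^2 - 96 * s^3 * x * p - 144 * s^3 * x + 72 * s^2 * x^3 * p - 96 * s^2 * x^3 + 120 * s^2 * x^2 - 24 * s^2 * x - 32 * s * x^4 + 12 * s * x^3 * p - 32 * s * x^3 + 64 * s * x^2 - 16 * x^4 + 8 * x^3 + 8 * x^2)"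

definition pNX :: "complex \<Rightarrow> complex \<Rightarrow> complex \<Rightarrow> complex" where
  "pNX s x p = (- (12 * s^9 * p) - 54 * s^8 * p - 96 * s^7 * p + 36 * s^6 * x * p + 32 * s^6 * x - 102 * s^6 * p - 16 * s^6 + 36 * s^5 * x^2 * p + 72 * s^5 * x * p + 96 * s^5 * x - 72 * s^5 * p - 48 * s^5 + 90 * s^4 * x^2 * p + 36 * s^4 * x * p + 72 * s^4 * x - 24 * s^4 * p - 36 * s^4 + 72 * s^3 * x^2 * p - 96 * s^3 * x^2 + 80 * s^3 * x - 8 * s^3 - 64 * s^2 * x^3 + 18 * s^2 * x^2 * p - 48 * s^2 * x^2 + 64 * s^2 * x - 64 * s * x^3 + 24 * s * x^2 + 16 * s * x - 16 * x^3 + 12 * x^2)"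

definition pNP :: "complex \<Rightarrow> complex \<Rightarrow> complex \<Rightarrow> complex" where
  "pNP s x p = (6 * s^10 - 12 * s^9 * x + 36 * s^9 - 54 * s^8 * x + 78 * s^8 - 96 * s^7 * x + 72 * s^7 + 18 * s^6 * x^2 - 102 * s^6 * x + 24 * s^6 + 12 * s^5 * x^3 + 36 * s^5 * x^2 - 72 * s^5 * x + 30 * s^4 * x^3 + 18 * s^4 * x^2 - 24 * s^4 * x + 24 * s^3 * x^3 + 6 * s^2 * x^3)"

definition pRN :: "complex \<Rightarrow> complex \<Rightarrow> complex \<Rightarrow> complex" where
  "pRN s x p = (- (2 * s^12 * x * p^2) + s^12 * p^2 - 12 * s^11 * x * p^2 + 6 * s^11 * p^2 - 24 * s^10 * x * p^2 + 12 * s^10 * p^2 + 6 * s^9 * x^2 * p^2 + 4 * s^9 * x^2 * p - 16 * s^9 * x * p^2 - 4 * s^9 * x * p + 6 * s^9 * p^2 + 27 * s^8 * x^2 * p^2 + 18 * s^8 * x^2 * p - 18 * s^8 * x * p - 9 * s^8 * p^2 + 36 * s^7 * x^2 * p^2 + 24 * s^7 * x^2 * p - 24 * s^7 * x * p - 12 * s^7 * p^2 - 16 * s^6 * x^3 * p + 24 * s^6 * x^2 * p + 8 * s^6 * x * p^2 - 8 * s^6 * x * p - 4 * s^6 * p^2 - 48 * s^5 * x^3 * p - 36 * s^5 * x^2 * p^2 + 48 * s^5 * x^2 * p + 24 * s^5 * x * p^2 - 36 * s^4 * x^3 * p - 27 * s^4 * x^2 * p^2 + 36 * s^4 * x^2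 * p + 18 * s^4 * x * p^2 + 8 * s^3 * x^4 + 8 * s^3 * x^3 * p - 16 * s^3 * x^3 - 6 * s^3 * x^2 * p^2 - 8 * s^3 * x^2 * p + 8 * s^3 * x^2 + 4 * s^3 * x * p^2 + 12 * s^2 * x^4 + 24 * s^2 * x^3 * p - 24 * s^2 * x^3 - 24 * s^2 * x^2 * p + 12 * s^2 * x^2 + 6 * s * x^4 + 12 * s * x^3 * p - 12 * s * x^3 - 12 * s * x^2 * p + 6 * s * x^2 + x^4 + 2 * x^3 * p - 2 * x^3 - 2 * x^2 * p + x^2)"

definition pQ2N :: "complex \<Rightarrow> complex \<Rightarrow> complex \<Rightarrow> complex" where
  "pQ2N s x p = (- (36 * s^22 * x * p^2) + 18 * s^22 * p^2 + 288 * s^21 * x^2 * p^2 - 684 * s^21 * x * p^2 + 198 * s^21 * p^2 - 144 * s^20 * x^3 * p^2 + 3240 * s^20 * x^2 * p^2 - 4896 * s^20 * x * p^2 + 900 * s^20 * p^2 - 1440 * s^19 * x^3 * p^2 + 15660 * s^19 * x^2 * p^2 + 24 * s^19 * x^2 * p - 18360 * s^19 * x * p^2 - 24 * s^19 * x * p + 2124 * s^19 * p^2 - 6984 * s^18 * x^3 * p^2 - 384 * s^18 * x^3 * p + 42966 * s^18 * x^2 * p^2 + 804 * s^18 * x^2 * p - 40032 * s^18 * x * p^2 - 420 * s^18 * x * p + 2538 * s^18 * p^2 - 144 * s^17 * x^4 * p^2 + 288 * s^17 * x^4 * p - 21528 * s^17 * x^3 * p^2 - 4032 * s^17 * x^3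 * p + 74178 * s^17 * x^2 * p^2 + 6180 * s^17 * x^2 * p - 49968 * s^17 * x * p^2 - 2436 * s^17 * x * p + 702 * s^17 * p^2 - 144 * s^16 * x^5 * p^2 - 864 * s^16 * x^4 * p^2 + 2448 * s^16 * x^4 * p - 44496 * s^16 * x^3 * p^2 - 17760 * s^16 * x^3 * p + 82296 * s^16 * x^2 * p^2 + 21948 * s^16 * x^2 * p - 25416 * s^16 * x * p^2 - 6636 * s^16 * x * p - 2016 * s^16 * p^2 - 1152 * s^15 * x^5 * p^2 - 504 * s^15 * x^4 * p^2 + 9840 * s^15 * x^4 * p + 128 * s^15 * x^4 - 60336 * s^15 * x^3 * p^2 - 44256 * s^15 * x^3 * p - 256 * s^15 * x^3 + 50256 * s^15 * x^2 * p^2 + 43440 * s^15 * x^2 * p + 128 * s^15 * x^2 + 21960 * s^15 * x * p^2 - 9024 * s^15 * x * p - 2736 * s^15 * p^2 - 2772 * s^14 * x^5 * p^2 + 960 * s^14 * x^5 * p - 128 * s^14 * x^5 + 6030 * s^14 * x^4 * p^2 + 22440 * s^14 * x^4 * p + 1280 * s^14 * x^4 - 48384 * s^14 * x^3 * p^2 - 68280 * s^14 * x^3 * p - 2176 * s^14 * x^3 - 9594 * s^14 * x^2 * p^2 + 49836 * s^14 * x^2 * p + 1024 * s^14 * x^2 + 51012 * s^14 * x * p^2 - 4956 * s^14 * x * p - 1440 * s^14 * p^2 + 432 * s^13 * x^6 * p^2 + 480 * s^13 * x^6 * p - 540 * s^13 * x^5 * p^2 + 5280 * s^13 * x^5 *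 p - 896 * s^13 * x^5 + 14634 * s^13 * x^4 * p^2 + 26280 * s^13 * x^4 * p + 4816 * s^13 * x^4 - 8352 * s^13 * x^3 * p^2 - 58056 * s^13 * x^3 * p - 6944 * s^13 * x^3 - 64206 * s^13 * x^2 * p^2 + 24624 * s^13 * x^2 * p + 3024 * s^13 * x^2 + 42876 * s^13 * x * p^2 + 1392 * s^13 * x * p - 288 * s^13 * p^2 + 2808 * s^12 * x^6 * p^2 + 3120 * s^12 * x^6 * p + 6768 * s^12 * x^5 * p^2 + 7872 * s^12 * x^5 * p - 3520 * s^12 * x^5 + 8820 * s^12 * x^4 * p^2 + 8712 * s^12 * x^4 * p + 10984 * s^12 * x^4 + 36720 * s^12 * x^3 * p^2 - 1668 * s^12 * x^3 * p - 11408 * s^12 * x^3 - 84492 * s^12 * x^2 * p^2 - 21108 * s^12 * x^2 * p + 3944 * s^12 * x^2 + 19080 * s^12 * x * p^2 + 3072 * s^12 * x * p + 7020 * s^11 * x^6 * p^2 + 4440 * s^11 * x^6 * p - 1216 * s^11 * x^6 + 7848 * s^11 * x^5 * p^2 + 2712 * s^11 * x^5 * p - 5824 * s^11 * x^5 - 8820 * s^11 * x^4 * p^2 - 16128 * s^11 * x^4 * p + 17196 * s^11 * x^4 + 60192 * s^11 * x^3 * p^2 + 58200 * s^11 * x^3 * p - 12056 * s^11 * x^3 - 66672 * s^11 * x^2 * p^2 - 50568 * s^11 * x^2 * p + 1900 * s^11 * x^2 + 4176 * s^11 * x * p^2 + 1344 * s^11 * x * p - 1536 * s^10 * x^7 *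 p - 384 * s^10 * x^7 + 7722 * s^10 * x^6 * p^2 - 4524 * s^10 * x^6 * p - 5344 * s^10 * x^6 - 2304 * s^10 * x^5 * p^2 + 11676 * s^10 * x^5 * p + 3864 * s^10 * x^5 - 14634 * s^10 * x^4 * p^2 - 44280 * s^10 * x^4 * p + 9486 * s^10 * x^4 + 52488 * s^10 * x^3 * p^2 + 80616 * s^10 * x^3 * p - 7268 * s^10 * x^3 - 33264 * s^10 * x^2 * p^2 - 42144 * s^10 * x^2 * p - 354 * s^10 * x^2 + 288 * s^10 * x * p^2 + 192 * s^10 * x * p - 7680 * s^9 * x^7 * p - 1920 * s^9 * x^7 + 1134 * s^9 * x^6 * p^2 - 11436 * s^9 * x^6 * p - 4688 * s^9 * x^6 - 8784 * s^9 * x^5 * p^2 + 38028 * s^9 * x^5 * p + 18696 * s^9 * x^5 - 6030 * s^9 * x^4 * p^2 - 76896 * s^9 * x^4 * p - 16318 * s^9 * x^4 + 29016 * s^9 * x^3 * p^2 + 75612 * s^9 * x^3 * p + 4900 * s^9 * x^3 - 9504 * s^9 * x^2 * p^2 - 17628 * s^9 * x^2 * p - 670 * s^9 * x^2 - 14016 * s^8 * x^7 * p + 64 * s^8 * x^7 - 6480 * s^8 * x^6 * p^2 + 2364 * s^8 * x^6 * p - 1400 * s^8 * x^6 - 3816 * s^8 * x^5 * p^2 + 38028 * s^8 * x^5 * p + 15880 * s^8 * x^5 + 504 * s^8 * x^4 * p^2 - 78552 * s^8 * x^4 * p - 28040 * s^8 * x^4 + 10512 * s^8 * x^3 * p^2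 + 55680 * s^8 * x^3 * p + 13720 * s^8 * x^3 - 1152 * s^8 * x^2 * p^2 - 3504 * s^8 * x^2 * p - 224 * s^8 * x^2 + 1344 * s^7 * x^8 - 9984 * s^7 * x^7 * p + 6400 * s^7 * x^7 - 7560 * s^7 * x^6 * p^2 + 16272 * s^7 * x^6 * p - 16032 * s^7 * x^6 + 1944 * s^7 * x^5 * p^2 + 11136 * s^7 * x^5 * p + 18256 * s^7 * x^5 + 864 * s^7 * x^4 * p^2 - 44352 * s^7 * x^4 * p - 20760 * s^7 * x^4 + 2448 * s^7 * x^3 * p^2 + 27168 * s^7 * x^3 * p + 10816 * s^7 * x^3 - 240 * s^7 * x^2 * p - 24 * s^7 * x^2 + 4704 * s^6 * x^8 + 1536 * s^6 * x^7 * p + 1576 * s^6 * x^7 - 3942 * s^6 * x^6 * p^2 + 9228 * s^6 * x^6 * p - 24556 * s^6 * x^6 + 2196 * s^6 * x^5 * p^2 - 3228 * s^6 * x^5 * p + 29632 * s^6 * x^5 + 144 * s^6 * x^4 * p^2 - 14736 * s^6 * x^4 * p - 15420 * s^6 * x^4 + 288 * s^6 * x^3 * p^2 + 7200 * s^6 * x^3 * p + 4064 * s^6 * x^3 + 5184 * s^5 * x^8 + 7296 * s^5 * x^7 * p - 8840 * s^5 * x^7 - 1026 * s^5 * x^6 * p^2 - 2352 * s^5 * x^6 * p - 8108 * s^5 * x^6 + 684 * s^5 * x^5 * p^2 - 1848 * s^5 * x^5 * p + 22728 * s^5 * x^5 - 3864 * s^5 * x^4 * p - 11692 * s^5 * x^4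 + 768 * s^5 * x^3 * p + 728 * s^5 * x^3 + 1200 * s^4 * x^8 + 5028 * s^4 * x^7 * p - 6824 * s^4 * x^7 - 108 * s^4 * x^6 * p^2 - 4116 * s^4 * x^6 * p + 4560 * s^4 * x^6 + 72 * s^4 * x^5 * p^2 + 96 * s^4 * x^5 * p + 6600 * s^4 * x^5 - 1008 * s^4 * x^4 * p - 5584 * s^4 * x^4 + 48 * s^4 * x^3 - 1740 * s^3 * x^8 + 1608 * s^3 * x^7 * p + 664 * s^3 * x^7 - 1560 * s^3 * x^6 * p + 2540 * s^3 * x^6 + 96 * s^3 * x^5 * p - 112 * s^3 * x^5 - 144 * s^3 * x^4 * p - 1352 * s^3 * x^4 - 1458 * s^2 * x^8 + 240 * s^2 * x^7 * p + 2404 * s^2 * x^7 - 240 * s^2 * x^6 * p - 562 * s^2 * x^6 - 256 * s^2 * x^5 - 128 * s^2 * x^4 - 438 * s * x^8 + 12 * s * x^7 * p + 916 * s * x^7 - 12 * s * x^6 * p - 518 * s * x^6 + 40 * s * x^5 - 48 * x^8 + 112 * x^7 - 80 * x^6 + 16 * x^5)"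

definition pLN :: "complex \<Rightarrow> complex \<Rightarrow> complex \<Rightarrow> complex" where
  "pLN s x p = (- (288 * s^26 * x * p^2) + 144 * s^26 * p^2 + 2304 * s^25 * x^2 * p^2 - 6048 * s^25 * x * p^2 + 1872 * s^25 * p^2 - 1152 * s^24 * x^3 * p^2 + 30528 * s^24 * x^2 * p^2 - 50544 * s^24 * x * p^2 + 10584 * s^24 * p^2 - 13824 * s^23 * x^3 * p^2 + 180576 * s^23 * x^2 * p^2 + 192 * s^23 * x^2 * p - 233568 * s^23 * x * p^2 - 192 * s^23 * x * p + 33840 * s^23 * p^2 - 80640 * s^22 * x^3 * p^2 - 3072 * s^22 * x^3 * p + 634320 * s^22 * x^2 * p^2 + 6816 * s^22 * x^2 * p - 675522 * s^22 * x * p^2 - 3744 * s^22 * x * p + 65889 * s^22 * p^2 - 1152 * s^21 * x^4 * p^2 + 2304 * s^21 * x^4 * p - 301824 * s^21 * x^3 * p^2 - 38400 * s^21 * x^3 * p + 1481904 * s^21 * x^2 * p^2 + 64320 * s^21 * x^2 * p - 1280502 * s^21 * x * p^2 - 28224 * s^21 * x * p + 75411 * s^21 * p^2 - 1152 * s^20 * x^5 * p^2 - 9216 * s^20 * x^4 * p^2 + 24192 * s^20 * x^4 * p - 790056 * s^20 * x^3 * p^2 - 211200 * s^20 * x^3 * p + 2425068 * s^20 * x^2 * p^2 + 302352 * s^20 * x^2 * p - 1559088 * s^20 * x * p^2 - 115344 * s^20 * x * p + 34506 * s^20 * p^2 - 11520 * s^19 * x^5 * p^2 - 19584 * s^19 *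 x^4 * p^2 + 114432 * s^19 * x^4 * p + 1024 * s^19 * x^4 - 1481616 * s^19 * x^3 * p^2 - 674304 * s^19 * x^3 * p - 2048 * s^19 * x^3 + 2788614 * s^19 * x^2 * p^2 + 851244 * s^19 * x^2 * p + 1024 * s^19 * x^2 - 999900 * s^19 * x * p^2 - 291372 * s^19 * x * p - 34506 * s^19 * p^2 - 42336 * s^18 * x^5 * p^2 + 7680 * s^18 * x^5 * p - 1024 * s^18 * x^5 + 29232 * s^18 * x^4 * p^2 + 301824 * s^18 * x^4 * p + 12288 * s^18 * x^4 - 1976004 * s^18 * x^3 * p^2 - 1362816 * s^18 * x^3 * p - 21504 * s^18 * x^3 + 2033091 * s^18 * x^2 * p^2 + 1537314 * s^18 * x^2 * p + 10240 * s^18 * x^2 + 234576 * s^18 * x * p^2 - 484002 * s^18 * x * p - 75411 * s^18 * p^2 + 3456 * s^17 * x^6 * p^2 + 3840 * s^17 * x^6 * p - 63072 * s^17 * x^5 * p^2 + 57600 * s^17 * x^5 * p - 9216 * s^17 * x^5 + 203976 * s^17 * x^4 * p^2 + 424272 * s^17 * x^4 * p + 65152 * s^17 * x^4 - 1753740 * s^17 * x^3 * p^2 - 1708320 * s^17 * x^3 * p - 102656 * s^17 * x^3 + 302193 * s^17 * x^2 * p^2 + 1765182 * s^17 * x^2 * p + 46720 * s^17 * x^2 + 1296072 * s^17 * x * p^2 - 542574 * s^17 * x * p - 65889 * s^17 * p^2 + 29376 * s^16 * x^6 * p^2 + 32640 * s^16 * x^6 * p + 7560 * s^16 * x^5 *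 p^2 + 186624 * s^16 * x^5 * p - 34816 * s^16 * x^5 + 374616 * s^16 * x^4 * p^2 + 84648 * s^16 * x^4 * p + 196928 * s^16 * x^4 - 684072 * s^16 * x^3 * p^2 - 959952 * s^16 * x^3 * p - 289408 * s^16 * x^3 - 1576188 * s^16 * x^2 * p^2 + 1065396 * s^16 * x^2 * p + 127296 * s^16 * x^2 + 1525932 * s^16 * x * p^2 - 409356 * s^16 * x * p - 33840 * s^16 * p^2 + 106272 * s^15 * x^6 * p^2 + 98112 * s^15 * x^6 * p - 9728 * s^15 * x^6 + 152928 * s^15 * x^5 * p^2 + 415296 * s^15 * x^5 * p - 40448 * s^15 * x^5 + 270036 * s^15 * x^4 * p^2 - 1019448 * s^15 * x^4 * p + 335968 * s^15 * x^4 + 745128 * s^15 * x^3 * p^2 + 930480 * s^15 * x^3 * p - 511680 * s^15 * x^3 - 2668968 * s^15 * x^2 * p^2 - 225180 * s^15 * x^2 * p + 225888 * s^15 * x^2 + 1068228 * s^15 * x * p^2 - 199260 * s^15 * x * p - 10584 * s^15 * p^2 - 12288 * s^14 * x^7 * p - 3072 * s^14 * x^7 + 209520 * s^14 * x^6 * p^2 + 126048 * s^14 * x^6 * p - 62208 * s^14 * x^6 + 184806 * s^14 * x^5 * p^2 + 878400 * s^14 * x^5 * p + 122240 * s^14 * x^5 - 90801 * s^14 * x^4 * p^2 - 2768052 * s^14 * x^4 * p + 223376 * s^14 * x^4 + 1766016 * s^14 * x^3 * p^2 + 3029196 * s^14 * x^3 * p - 549280 * s^14 * x^3 - 2608389 *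 s^14 * x^2 * p^2 - 1199388 * s^14 * x^2 * p + 268944 * s^14 * x^2 + 495090 * s^14 * x * p^2 - 53916 * s^14 * x * p - 1872 * s^14 * p^2 - 86016 * s^13 * x^7 * p - 21504 * s^13 * x^7 + 228312 * s^13 * x^6 * p^2 + 42096 * s^13 * x^6 * p - 179072 * s^13 * x^6 + 13842 * s^13 * x^5 * p^2 + 1734480 * s^13 * x^5 * p + 573952 * s^13 * x^5 - 345627 * s^13 * x^4 * p^2 - 4600764 * s^13 * x^4 * p - 308120 * s^13 * x^4 + 1936944 * s^13 * x^3 * p^2 + 4245060 * s^13 * x^3 * p - 281808 * s^13 * x^3 - 1778391 * s^13 * x^2 * p^2 - 1332588 * s^13 * x^2 * p + 216552 * s^13 * x^2 + 152478 * s^13 * x * p^2 - 2268 * s^13 * x * p - 144 * s^13 * p^2 - 267264 * s^12 * x^7 * p - 44032 * s^12 * x^7 + 88452 * s^12 * x^6 * p^2 - 27096 * s^12 * x^6 * p - 392512 * s^12 * x^6 - 163944 * s^12 * x^5 * p^2 + 2668560 * s^12 * x^5 * p + 1255040 * s^12 * x^5 - 298926 * s^12 * x^4 * p^2 - 5662512 * s^12 * x^4 * p - 1039620 * s^12 * x^4 + 1437336 * s^12 * x^3 * p^2 + 4169436 * s^12 * x^3 * p + 104328 * s^12 * x^3 - 869382 * s^12 * x^2 * p^2 - 884508 * s^12 * x^2 * p + 116796 * s^12 * x^2 + 29700 * s^12 * x * p^2 + 3384 * s^12 * x * p + 10752 * s^11 * x^8 - 485376 * s^11 * x^7 * p - 27648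 * s^11 * x^7 - 116154 * s^11 * x^6 * p^2 + 97404 * s^11 * x^6 * p - 764576 * s^11 * x^6 - 156204 * s^11 * x^5 * p^2 + 2962332 * s^11 * x^5 * p + 1979104 * s^11 * x^5 - 120330 * s^11 * x^4 * p^2 - 5316984 * s^11 * x^4 * p - 1567010 * s^11 * x^4 + 776016 * s^11 * x^3 * p^2 + 3133608 * s^11 * x^3 * p + 328740 * s^11 * x^3 - 298872 * s^11 * x^2 * p^2 - 391992 * s^11 * x^2 * p + 40638 * s^11 * x^2 + 3240 * s^11 * x * p^2 + 1008 * s^11 * x * p + 59136 * s^10 * x^8 - 568320 * s^10 * x^7 * p + 15744 * s^10 * x^7 - 221859 * s^10 * x^6 * p^2 + 316482 * s^10 * x^6 * p - 1214064 * s^10 * x^6 - 33408 * s^10 * x^5 * p^2 + 2360502 * s^10 * x^5 * p + 2478348 * s^10 * x^5 - 10413 * s^10 * x^4 * p^2 - 3807240 * s^10 * x^4 * p - 1664941 * s^10 * x^4 + 309924 * s^10 * x^3 * p^2 + 1815378 * s^10 * x^3 * p + 317558 * s^10 * x^3 - 68472 * s^10 * x^2 * p^2 - 116898 * s^10 * x^2 * p + 8219 * s^10 * x^2 + 144 * s^10 * x * p^2 + 96 * s^10 * x * p + 151296 * s^9 * x^8 - 442368 * s^9 * x^7 * p + 2944 * s^9 * x^7 - 187353 * s^9 * x^6 * p^2 + 380862 * s^9 * x^6 * p - 1450376 * s^9 * x^6 + 44280 * s^9 * x^5 * p^2 + 1367898 * s^9 * x^5 * p + 2479748 * s^9 * x^5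 + 11673 * s^9 * x^4 * p^2 - 2074536 * s^9 * x^4 * p - 1375983 * s^9 * x^4 + 90540 * s^9 * x^3 * p^2 + 790614 * s^9 * x^3 * p + 191730 * s^9 * x^3 - 9360 * s^9 * x^2 * p^2 - 22470 * s^9 * x^2 * p + 641 * s^9 * x^2 + 237312 * s^8 * x^8 - 222336 * s^8 * x^7 * p - 90432 * s^8 * x^7 - 98064 * s^8 * x^6 * p^2 + 253164 * s^8 * x^6 * p - 1274268 * s^8 * x^6 + 43740 * s^8 * x^5 * p^2 + 584676 * s^8 * x^5 * p + 1950168 * s^8 * x^5 + 5436 * s^8 * x^4 * p^2 - 860952 * s^8 * x^4 * p - 902428 * s^8 * x^4 + 18504 * s^8 * x^3 * p^2 + 247944 * s^8 * x^3 * p + 79712 * s^8 * x^3 - 576 * s^8 * x^2 * p^2 - 2496 * s^8 * x^2 * p - 64 * s^8 * x^2 + 252864 * s^7 * x^8 - 59904 * s^7 * x^7 * p - 177408 * s^7 * x^7 - 33588 * s^7 * x^6 * p^2 + 93684 * s^7 * x^6 * p - 821832 * s^7 * x^6 + 19116 * s^7 * x^5 * p^2 + 186300 * s^7 * x^5 * p + 1187296 * s^7 * x^5 + 1008 * s^7 * x^4 * p^2 - 272424 * s^7 * x^4 * p - 463796 * s^7 * x^4 + 2376 * s^7 * x^3 * p^2 + 52464 * s^7 * x^3 * p + 22888 * s^7 * x^3 - 120 * s^7 * x^2 * p - 12 * s^7 * x^2 + 191520 * s^6 * x^8 + 3024 * s^6 * x^7 * p - 179340 * s^6 * x^7 - 7371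 * s^6 * x^6 * p^2 + 11220 * s^6 * x^6 * p - 388618 * s^6 * x^6 + 4698 * s^6 * x^5 * p^2 + 44280 * s^6 * x^5 * p + 553508 * s^6 * x^5 + 72 * s^6 * x^4 * p^2 - 65196 * s^6 * x^4 * p - 181402 * s^6 * x^4 + 144 * s^6 * x^3 * p^2 + 6672 * s^6 * x^3 * p + 4332 * s^6 * x^3 + 104832 * s^5 * x^8 + 9840 * s^5 * x^7 * p - 115620 * s^5 * x^7 - 945 * s^5 * x^6 * p^2 - 6492 * s^5 * x^6 * p - 133998 * s^5 * x^6 + 630 * s^5 * x^5 * p^2 + 7632 * s^5 * x^5 * p + 196012 * s^5 * x^5 - 11364 * s^5 * x^4 * p - 51710 * s^5 * x^4 + 384 * s^5 * x^3 * p + 484 * s^5 * x^3 + 41328 * s^4 * x^8 + 4188 * s^4 * x^7 * p - 50280 * s^4 * x^7 - 54 * s^4 * x^6 * p^2 - 3756 * s^4 * x^6 * p - 33436 * s^4 * x^6 + 36 * s^4 * x^5 * p^2 + 864 * s^4 * x^5 * p + 52424 * s^4 * x^5 - 1296 * s^4 * x^4 * p - 10060 * s^4 * x^4 + 24 * s^4 * x^3 + 11466 * s^3 * x^8 + 936 * s^3 * x^7 * p - 14780 * s^3 * x^7 - 912 * s^3 * x^6 * p - 6026 * s^3 * x^6 + 48 * s^3 * x^5 * p + 10528 * s^3 * x^5 - 72 * s^3 * x^4 * p - 1188 * s^3 * x^4 + 2127 * s^2 * x^8 + 114 * s^2 * x^7 * p - 2826 * s^2 * x^7 - 114 * s^2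 * x^6 * p - 793 * s^2 * x^6 + 1556 * s^2 * x^5 - 64 * s^2 * x^4 + 237 * s * x^8 + 6 * s * x^7 * p - 318 * s * x^7 - 6 * s * x^6 * p - 75 * s * x^6 + 156 * s * x^5 + 12 * x^8 - 16 * x^7 - 4 * x^6 + 8 * x^5)"

definition pNp :: "complex \<Rightarrow> complex \<Rightarrow> complex \<Rightarrow> complex" where
  "pNp s x p = (- (6 * s^6 * p) + 12 * s^5 * x * p - 24 * s^5 * p + 30 * s^4 * x * p - 30 * s^4 * p + 24 * s^3 * x * p - 12 * s^3 * p - 16 * s^2 * x^2 + 6 * s^2 * x * p + 16 * s^2 * x - 16 * s * x^2 + 16 * s * x - 4 * x^2 + 4 * x)"

definition pK2 :: "complex \<Rightarrow> complex \<Rightarrow> complex \<Rightarrow> complex" where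
  "pK2 s x p = (- (2 * s^12 * x) + s^12 + 16 * s^11 * x^2 - 28 * s^11 * x + 6 * s^11 - 8 * s^10 * x^3 + 100 * s^10 * x^2 - 116 * s^10 * x + 12 * s^10 - 40 * s^9 * x^3 + 242 * s^9 * x^2 - 212 * s^9 * x + 8 * s^9 - 124 * s^8 * x^3 + 345 * s^8 * x^2 - 194 * s^8 * x - 8 * s^7 * x^4 - 240 * s^7 * x^3 + 372 * s^7 * x^2 - 88 * s^7 * x - 8 * s^6 * x^5 - 8 * s^6 * x^4 - 256 * s^6 * x^3 + 280 * s^6 * x^2 - 8 * s^6 * x - 24 * s^5 * x^5 + 76 * s^5 * x^4 - 240 * s^5 * x^3 + 152 * s^5 * x^2 + 30 * s^4 * x^5 + 35 * s^4 * x^4 - 124 * s^4 * x^3 + 32 * s^4 * x^2 + 24 * s^3 * x^6 + 28 * s^3 * x^5 - 10 * s^3 * x^4 - 40 * s^3 * x^3 + 36 * s^2 * x^6 - 12 * s^2 * x^5 - 4 * s^2 * x^4 - 8 * s^2 * x^3 + 18 * s * x^6 - 12 * s * x^5 + 3 * x^6 - 2 * x^5)"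

definition pK1 :: "complex \<Rightarrow> complex \<Rightarrow> complex \<Rightarrow> complex" where
  "pK1 s x p = (- (s^12) + 12 * s^11 * x - 12 * s^11 - 4 * s^10 * x^2 + 70 * s^10 * x - 60 * s^10 - 20 * s^9 * x^2 + 180 * s^9 * x - 160 * s^9 - 113 * s^8 * x^2 + 338 * s^8 * x - 240 * s^8 + 16 * s^7 * x^3 - 356 * s^7 * x^2 + 532 * s^7 * x - 192 * s^7 + 56 * s^6 * x^3 - 536 * s^6 * x^2 + 564 * s^6 * x - 64 * s^6 + 156 * s^5 * x^3 - 512 * s^5 * x^2 + 356 * s^5 * x + 250 * s^4 * x^3 - 392 * s^4 * x^2 + 127 * s^4 * x + 188 * s^3 * x^3 - 200 * s^3 * x^2 + 12 * s^3 * x + 60 * s^2 * x^3 - 50 * s^2 * x^2 - 4 * s^2 * x + 4 * s * x^3 - 4 * s * x^2 - x^3)"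

definition pM10 :: "complex \<Rightarrow> complex \<Rightarrow> complex \<Rightarrow> complex" where
  "pM10 s x p = (- (6 * s^16 * p) + 84 * s^15 * x * p - 90 * s^15 * p - 168 * s^14 * x^2 * p + 798 * s^14 * x * p - 588 * s^14 * p + 48 * s^13 * x^3 * p - 1248 * s^13 * x^2 * p + 3426 * s^13 * x * p - 2184 * s^13 * p + 312 * s^12 * x^3 * p - 4578 * s^12 * x^2 * p - 32 * s^12 * x^2 + 9180 * s^12 * x * p + 32 * s^12 * x - 5040 * s^12 * p + 1836 * s^11 * x^3 * p + 160 * s^11 * x^3 - 12126 * s^11 * x^2 * p - 432 * s^11 * x^2 + 17556 * s^11 * x * p + 272 * s^11 * x - 7392 * s^11 * p - 192 * s^10 * x^4 * p - 64 * s^10 * x^4 + 7050 * s^10 * x^3 * p + 1008 * s^10 * x^3 - 24528 * s^10 * x^2 * p - 1996 * s^10 * x^2 + 24600 * s^10 * x * p + 1052 * s^10 * x - 6720 * s^10 * p - 960 * s^9 * x^4 * p - 320 * s^9 * x^4 + 15654 * s^9 * x^3 * p + 3024 * s^9 * x^3 - 35364 * s^9 * x^2 * p - 5196 * s^9 * x^2 + 24336 * s^9 * x * p + 2492 * s^9 * x - 3456 * s^9 * p - 2976 * s^8 * x^4 * p - 1744 * s^8 * x^4 + 22908 * s^8 * x^3 * p + 7616 * s^8 * x^3 - 35616 * s^8 * x^2 * p - 9693 * s^8 * x^2 + 16242 * s^8 * x * p + 3821 * s^8 * x - 768 * s^8 * p + 288 * s^7 * x^5 - 6144 * s^7 * x^4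 * p - 5776 * s^7 * x^4 + 24636 * s^7 * x^3 * p + 15014 * s^7 * x^3 - 25716 * s^7 * x^2 * p - 13029 * s^7 * x^2 + 7014 * s^7 * x * p + 3503 * s^7 * x + 1008 * s^6 * x^5 - 7692 * s^6 * x^4 * p - 9916 * s^6 * x^4 + 19272 * s^6 * x^3 * p + 18845 * s^6 * x^3 - 13170 * s^6 * x^2 * p - 11571 * s^6 * x^2 + 1716 * s^6 * x * p + 1634 * s^6 * x + 2592 * s^5 * x^5 - 5604 * s^5 * x^4 * p - 12316 * s^5 * x^4 + 9912 * s^5 * x^3 * p + 16463 * s^5 * x^3 - 4254 * s^5 * x^2 * p - 7047 * s^5 * x^2 + 72 * s^5 * x * p + 308 * s^5 * x + 3960 * s^4 * x^5 - 2256 * s^4 * x^4 * p - 11647 * s^4 * x^4 + 2934 * s^4 * x^3 * p + 10571 * s^4 * x^3 - 672 * s^4 * x^2 * p - 2892 * s^4 * x^2 - 48 * s^4 * x * p + 8 * s^4 * x + 3330 * s^3 * x^5 - 420 * s^3 * x^4 * p - 7351 * s^3 * x^4 + 402 * s^3 * x^3 * p + 4637 * s^3 * x^3 - 24 * s^3 * x^2 * p - 616 * s^3 * x^2 + 1539 * s^2 * x^5 - 6 * s^2 * x^4 * p - 2761 * s^2 * x^4 + 12 * s^2 * x^3 * p + 1222 * s^2 * x^3 + 369 * s * x^5 + 6 * s * x^4 * p - 549 * s * x^4 + 164 * s * x^3 + 16 * s * x^2 + 36 * x^5 - 44 * x^4 + 8 * x^3)"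

lemma A1:
  fixes T Q P U1 U2 U3 :: complex
  assumes "U1 = Q - 1" "U2 = Q - T" "U3 = T - 1" "Q \<noteq> 0" "U1 \<noteq> 0" "U2 \<noteq> 0" "T \<noteq> 0" "U3 \<noteq> 0"
  shows "PVI_rhs 0 0 0 (1/2) T Q P = (T * U3 * (3 * Q^2 - 2 * (1 + T) * Q + T) * P^2 - 2 * Q * U1 * (2 * T * Q - T^2 - Q) * P + Q^2 * U1^2) / (2 * Q * U1 * U2 * T * U3)"
proof -
  have h: "Q - 1 = U1" "Q - T = U2" "T - 1 = U3" using assms by auto
  show ?thesis unfolding PVI_rhs_def h using assms(4-8)
    by (simp add: field_simps) (simp only: assms(1-3); algebra)
qed

lemma split3: "((u::complex) - v + w) / z = u / z + (0 - v + w) / z"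
  by (simp add: diff_divide_distrib add_divide_distrib)

lemma P1:
  fixes s x p r a b c d D E G H y xt :: complex
  assumes da: "a = 2 * s + 1" and db: "b = s + 2" and dc: "c = s - 1" and dd: "d = s + 1"
    and dD: "D = (2 * s + 1) * x + s^2" and dE: "E = x + s * (s + 2)" and dG: "G = x - s^2"
    and dH: "H = s^2 + 2 * s - (2 * s + 1) * x" and dy: "y = x - 1" and dxt: "xt = (2 * s + 1) * x - s^3 * (s + 2)"
  shows "pNN s x p = E * G * pNp s x p"
  unfolding pNN_def pNp_def
  apply (simp only: da db dc dd dD dE dG dH dy dxt)
  apply algebra
  done

lemma P2:
  fixes s x p r a b c d D E G H y xt :: complex
  assumes da: "a = 2 * s + 1" and db: "b = s + 2" and dc: "c = s - 1" and dd: "d = s + 1"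
    and dD: "D = (2 * s + 1) * x + s^2" and dE: "E = x + s * (s + 2)" and dG: "G = x - s^2"
    and dH: "H = s^2 + 2 * s - (2 * s + 1) * x" and dy: "y = x - 1" and dxt: "xt = (2 * s + 1) * x - s^3 * (s + 2)"
  assumes nz: "a \<noteq> 0" "b \<noteq> 0" "c \<noteq> 0" "d \<noteq> 0" "D \<noteq> 0" "E \<noteq> 0" "G \<noteq> 0" "H \<noteq> 0" "y \<noteq> 0" "xt \<noteq> 0" "s \<noteq> 0" "x \<noteq> 0"
  shows "(s^3 * b / a * (c * d^3 / a) * (3 * x^2 - 2 * (1 + s^3 * b / a) * x + s^3 * b / a) * p^2 - 2 * x * y * (2 * (s^3 * b / a) * x - (s^3 * b / a)^2 - x) * p + x^2 * y^2) / (2 * x * y * (xt / a) * (s^3 * b / a) * (c * d^3 / a)) = pRN s x p / (2 * b * c * d^3 * s^3 * x * y * xt)"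
  unfolding pRN_def
  apply (simp add: field_simps nz)
  apply (simp only: da db dc dd dD dE dG dH dy dxt)
  apply algebra
  done

lemma P3:
  fixes s x p r a b c d D E G H y xt :: complex
  assumes da: "a = 2 * s + 1" and db: "b = s + 2" and dc: "c = s - 1" and dd: "d = s + 1"
    and dD: "D = (2 * s + 1) * x + s^2" and dE: "E = x + s * (s + 2)" and dG: "G = x - s^2"
    and dH: "H = s^2 + 2 * s - (2 * s + 1) * x" and dy: "y = x - 1" and dxt: "xt = (2 * s + 1) * x - s^3 * (s + 2)"
  shows "s * d * pQ2N s x p = s * d * b * c * x * y * xt * (pNS s x p * a^2 * D + 6 * pNX s x p * p * s^2 * d^2 * D - pNN s x p * (4 * a * D + 6 * a^2 * (x + s) + 18 * a * p * s^2 * d^2)) + 3 * pNP s x p * pRN s x p * D"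
  unfolding pNN_def pNS_def pNX_def pNP_def pRN_def pQ2N_def
  apply (simp only: da db dc dd dD dE dG dH dy dxt)
  apply algebra
  done

lemma P4:
  fixes s x p r a b c d D E G H y xt :: complex
  assumes da: "a = 2 * s + 1" and db: "b = s + 2" and dc: "c = s - 1" and dd: "d = s + 1"
    and dD: "D = (2 * s + 1) * x + s^2" and dE: "E = x + s * (s + 2)" and dG: "G = x - s^2"
    and dH: "H = s^2 + 2 * s - (2 * s + 1) * x" and dy: "y = x - 1" and dxt: "xt = (2 * s + 1) * x - s^3 * (s + 2)"
  shows "a^4 * (pQ2N s x p - 18 * a * pNN s x p * D * x * y * xt) = 2 * pLN s x p"
  unfolding pNN_def pQ2N_def pLN_def
  apply (simp only: da db dc dd dD dE dG dH dy dxt)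
  apply algebra
  done

lemma P5:
  fixes s x p r a b c d D E G H y xt :: complex
  assumes da: "a = 2 * s + 1" and db: "b = s + 2" and dc: "c = s - 1" and dd: "d = s + 1"
    and dD: "D = (2 * s + 1) * x + s^2" and dE: "E = x + s * (s + 2)" and dG: "G = x - s^2"
    and dH: "H = s^2 + 2 * s - (2 * s + 1) * x" and dy: "y = x - 1" and dxt: "xt = (2 * s + 1) * x - s^3 * (s + 2)"
  shows "3 * x^2 * E^4 * a^3 - 2 * (a^3 + s * b^3) * x * E^2 * D^2 + s * b^3 * D^4 = pK2 s x p"
  unfolding pK2_def
  apply (simp only: da db dc dd dD dE dG dH dy dxt)
  apply algebra
  done

lemma P6:
  fixes s x p r a b c d D E G H y xt :: complex
  assumes da: "a = 2 * s + 1" and db: "b = s + 2" and dc: "c = s - 1" and dd: "d = s + 1"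
    and dD: "D = (2 * s + 1) * x + s^2" and dE: "E = x + s * (s + 2)" and dG: "G = x - s^2"
    and dH: "H = s^2 + 2 * s - (2 * s + 1) * x" and dy: "y = x - 1" and dxt: "xt = (2 * s + 1) * x - s^3 * (s + 2)"
  shows "2 * s * b^3 * x * E^2 * a^3 - s^2 * b^6 * D^2 - x * E^2 * a^6 = pK1 s x p"
  unfolding pK1_def
  apply (simp only: da db dc dd dD dE dG dH dy dxt)
  apply algebra
  done

lemma P7:
  fixes s x p r a b c d D E G H y xt :: complex
  assumes da: "a = 2 * s + 1" and db: "b = s + 2" and dc: "c = s - 1" and dd: "d = s + 1"
    and dD: "D = (2 * s + 1) * x + s^2" and dE: "E = x + s * (s + 2)" and dG: "G = x - s^2"
    and dH: "H = s^2 + 2 * s - (2 * s + 1) * x" and dy: "y = x - 1" and dxt: "xt = (2 * s + 1) * x - s^3 * (s + 2)"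
  shows "s * d * pM10 s x p = x * E * y * G * a^4 * D * b^2 * c^2 - pK1 s x p * pNp s x p"
  unfolding pNp_def pK1_def pM10_def
  apply (simp only: da db dc dd dD dE dG dH dy dxt)
  apply algebra
  done

lemma P8:
  fixes s x p r a b c d D E G H y xt :: complex
  assumes da: "a = 2 * s + 1" and db: "b = s + 2" and dc: "c = s - 1" and dd: "d = s + 1"
    and dD: "D = (2 * s + 1) * x + s^2" and dE: "E = x + s * (s + 2)" and dG: "G = x - s^2"
    and dH: "H = s^2 + 2 * s - (2 * s + 1) * x" and dy: "y = x - 1" and dxt: "xt = (2 * s + 1) * x - s^3 * (s + 2)"
  shows "pK2 s x p * (pNp s x p)^2 * a^4 * b * c + 4 * E * G * a^5 * pM10 s x p * D * x * y = 4 * pLN s x p * H^2"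
  unfolding pLN_def pNp_def pK2_def pM10_def
  apply (simp only: da db dc dd dD dE dG dH dy dxt)
  apply algebra
  done

lemma Sq2:
  fixes s x p r a b c d D E G H y xt :: complex
  assumes nz: "a \<noteq> 0" "b \<noteq> 0" "c \<noteq> 0" "d \<noteq> 0" "D \<noteq> 0" "E \<noteq> 0" "G \<noteq> 0" "H \<noteq> 0" "y \<noteq> 0" "xt \<noteq> 0" "s \<noteq> 0" "x \<noteq> 0"
  assumes hr: "r = pRN s x p / (2 * b * c * d^3 * s^3 * x * y * xt)" and P3h: "s * d * pQ2N s x p = s * d * b * c * x * y * xt * (pNS s x p * a^2 * D + 6 * pNX s x p * p * s^2 * d^2 * D - pNN s x p * (4 * a * D + 6 * a^2 * (x + s) + 18 * a * p * s^2 * d^2)) + 3 * pNP s x p * pRN s x p * D"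
  shows "((pNS s x p + pNX s x p * p * (6 * s^2 * d^2 / a^2) + pNP s x p * r * (6 * s^2 * d^2 / a^2)) * a * D - pNN s x p * (4 * D + 3 * a * (2 * x + 2 * s + a * p * (6 * s^2 * d^2 / a^2)))) / (a^3 * D^4) = pQ2N s x p / (D^4 * a^4 * b * c * x * y * xt)"
  unfolding hr
  apply (simp add: field_simps nz)
  apply (insert P3h)
  apply algebra
  done

lemma Slhs:
  fixes s x p r a b c d D E G H y xt :: complex
  assumes nz: "a \<noteq> 0" "b \<noteq> 0" "c \<noteq> 0" "d \<noteq> 0" "D \<noteq> 0" "E \<noteq> 0" "G \<noteq> 0" "H \<noteq> 0" "y \<noteq> 0" "xt \<noteq> 0" "s \<noteq> 0" "x \<noteq> 0"
  assumes P4h: "a^4 * (pQ2N s x p - 18 * a * pNN s x p * D * x * y * xt) = 2 * pLN s x p"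
  shows "(pQ2N s x p / (D^4 * a^4 * b * c * x * y * xt) * (2 * b^2 * c^2 / a^4) - (pNN s x p / (a^2 * D^3)) * (36 * b * c / a^5)) / (2 * b^2 * c^2 / a^4)^3 = pLN s x p / (2 * D^4 * b^5 * c^5 * x * y * xt)"
  apply (simp add: field_simps nz)
  apply (insert P4h)
  apply algebra
  done

lemma SK2:
  fixes s x p r a b c d D E G H y xt :: complex
  assumes nz: "a \<noteq> 0" "b \<noteq> 0" "c \<noteq> 0" "d \<noteq> 0" "D \<noteq> 0" "E \<noteq> 0" "G \<noteq> 0" "H \<noteq> 0" "y \<noteq> 0" "xt \<noteq> 0" "s \<noteq> 0" "x \<noteq> 0"
  assumes P5h: "3 * x^2 * E^4 * a^3 - 2 * (a^3 + s * b^3) * x * E^2 * D^2 + s * b^3 * D^4 = pK2 s x p"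
  shows "3 * (x * E^2 / D^2)^2 - 2 * (1 + (s * b^3 / a^3)) * (x * E^2 / D^2) + (s * b^3 / a^3) = pK2 s x p / (D^4 * a^3)"
  apply (simp add: field_simps nz)
  apply (simp only: P5h[symmetric])
  apply algebra
  done

lemma SK1:
  fixes s x p r a b c d D E G H y xt :: complex
  assumes nz: "a \<noteq> 0" "b \<noteq> 0" "c \<noteq> 0" "d \<noteq> 0" "D \<noteq> 0" "E \<noteq> 0" "G \<noteq> 0" "H \<noteq> 0" "y \<noteq> 0" "xt \<noteq> 0" "s \<noteq> 0" "x \<noteq> 0"
  assumes P6h: "2 * s * b^3 * x * E^2 * a^3 - s^2 * b^6 * D^2 - x * E^2 * a^6 = pK1 s x p"
  shows "2 * (s * b^3 / a^3) * (x * E^2 / D^2) - (s * b^3 / a^3)^2 - (x * E^2 / D^2) = pK1 s x p / (D^2 * a^6)"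
  apply (simp add: field_simps nz)
  apply (simp only: P6h[symmetric])
  apply algebra
  done

lemma SA:
  fixes s x p r a b c d D E G H y xt :: complex
  assumes nz: "a \<noteq> 0" "b \<noteq> 0" "c \<noteq> 0" "d \<noteq> 0" "D \<noteq> 0" "E \<noteq> 0" "G \<noteq> 0" "H \<noteq> 0" "y \<noteq> 0" "xt \<noteq> 0" "s \<noteq> 0" "x \<noteq> 0"
  shows "(s * b^3 / a^3) * (c^3 * d / a^3) * (pK2 s x p / (D^4 * a^3)) * (E * G * pNp s x p * a^2 / (2 * D^3 * b^2 * c^2))^2 / (2 * (x * E^2 / D^2) * (y * G^2 / D^2) * (xt * H^2 / (D^2 * a^3)) * (s * b^3 / a^3) * (c^3 * d / a^3)) = pK2 s x p * (pNp s x p)^2 * a^4 / (8 * D^4 * b^4 * c^4 * x * y * xt * H^2)"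
  apply (simp add: field_simps nz)
  apply algebra
  done

lemma SBC:
  fixes s x p r a b c d D E G H y xt :: complex
  assumes nz: "a \<noteq> 0" "b \<noteq> 0" "c \<noteq> 0" "d \<noteq> 0" "D \<noteq> 0" "E \<noteq> 0" "G \<noteq> 0" "H \<noteq> 0" "y \<noteq> 0" "xt \<noteq> 0" "s \<noteq> 0" "x \<noteq> 0"
  assumes P7h: "s * d * pM10 s x p = x * E * y * G * a^4 * D * b^2 * c^2 - pK1 s x p * pNp s x p"
  shows "(0 - 2 * (x * E^2 / D^2) * (y * G^2 / D^2) * (pK1 s x p / (D^2 * a^6)) * (E * G * pNp s x p * a^2 / (2 * D^3 * b^2 * c^2)) + (x * E^2 / D^2)^2 * (y * G^2 / D^2)^2) / (2 * (x * E^2 / D^2) * (y * G^2 / D^2) * (xt * H^2 / (D^2 * a^3)) * (s * b^3 / a^3) * (c^3 * d / a^3)) = E * G * a^5 * pM10 s x p / (2 * D^3 * b^5 * c^5 * xt * H^2)"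
  apply (simp add: field_simps nz)
  apply (insert P7h)
  apply algebra
  done

lemma Sfin:
  fixes s x p r a b c d D E G H y xt :: complex
  assumes nz: "a \<noteq> 0" "b \<noteq> 0" "c \<noteq> 0" "d \<noteq> 0" "D \<noteq> 0" "E \<noteq> 0" "G \<noteq> 0" "H \<noteq> 0" "y \<noteq> 0" "xt \<noteq> 0" "s \<noteq> 0" "x \<noteq> 0"
  assumes P8h: "pK2 s x p * (pNp s x p)^2 * a^4 * b * c + 4 * E * G * a^5 * pM10 s x p * D * x * y = 4 * pLN s x p * H^2"
  shows "pK2 s x p * (pNp s x p)^2 * a^4 / (8 * D^4 * b^4 * c^4 * x * y * xt * H^2) + E * G * a^5 * pM10 s x p / (2 * D^3 * b^5 * c^5 * xt * H^2) = pLN s x p / (2 * D^4 * b^5 * c^5 * x * y * xt)"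
  apply (simp add: field_simps nz)
  apply (insert P8h)
  apply algebra
  done

lemma Su:
  fixes s x p r a b c d D E G H y xt :: complex
  assumes da: "a = 2 * s + 1" and db: "b = s + 2" and dc: "c = s - 1" and dd: "d = s + 1"
    and dD: "D = (2 * s + 1) * x + s^2" and dE: "E = x + s * (s + 2)" and dG: "G = x - s^2"
    and dH: "H = s^2 + 2 * s - (2 * s + 1) * x" and dy: "y = x - 1" and dxt: "xt = (2 * s + 1) * x - s^3 * (s + 2)"
  assumes nz: "a \<noteq> 0" "b \<noteq> 0" "c \<noteq> 0" "d \<noteq> 0" "D \<noteq> 0" "E \<noteq> 0" "G \<noteq> 0" "H \<noteq> 0" "y \<noteq> 0" "xt \<noteq> 0" "s \<noteq> 0" "x \<noteq> 0"
  shows "x * E^2 / D^2 - 1 = y * G^2 / D^2" "x * E^2 / D^2 - s * b^3 / a^3 = xt * H^2 / (D^2 * a^3)" "s * b^3 / a^3 - 1 = c^3 * d / a^3"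
    "x - s^3 * b / a = xt / a" "s^3 * b / a - 1 = c * d^3 / a" "(pNN s x p / (a^2 * D^3)) / (2 * b^2 * c^2 / a^4) = (pNN s x p * a^2 / (2 * D^3 * b^2 * c^2))"
  subgoal
    apply (simp add: field_simps nz)
    apply (simp only: da db dc dd dD dE dG dH dy dxt)
    apply algebra
    done
  subgoal
    apply (simp add: field_simps nz)
    apply (simp only: da db dc dd dD dE dG dH dy dxt)
    apply algebra
    done
  subgoal
    apply (simp add: field_simps nz)
    apply (simp only: da db dc dd dD dE dG dH dy dxt)
    apply algebra
    done
  subgoal
    apply (simp add: field_simps nz)
    apply (simp only: da db dc dd dD dE dG dH dy dxt)
    apply algebra
    done
  subgoal
    apply (simp add: field_simps nz)
    apply (simp only: da db dc dd dD dE dG dH dy dxt)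
    apply algebra
    done
  subgoal by (simp add: field_simps nz)
  done

lemma key_alg:
  fixes s x p r a b c d D E G H y xt :: complex
  assumes da: "a = 2 * s + 1" and db: "b = s + 2" and dc: "c = s - 1" and dd: "d = s + 1"
    and dD: "D = (2 * s + 1) * x + s^2" and dE: "E = x + s * (s + 2)" and dG: "G = x - s^2"
    and dH: "H = s^2 + 2 * s - (2 * s + 1) * x" and dy: "y = x - 1" and dxt: "xt = (2 * s + 1) * x - s^3 * (s + 2)"
  assumes nz: "a \<noteq> 0" "b \<noteq> 0" "c \<noteq> 0" "d \<noteq> 0" "D \<noteq> 0" "E \<noteq> 0" "G \<noteq> 0" "H \<noteq> 0" "y \<noteq> 0" "xt \<noteq> 0" "s \<noteq> 0" "x \<noteq> 0"
  assumes hr: "r = PVI_rhs 0 0 0 (1/2) (s^3 * b / a) x p"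
  shows "(((pNS s x p + pNX s x p * p * (6 * s^2 * d^2 / a^2) + pNP s x p * r * (6 * s^2 * d^2 / a^2)) * a * D - pNN s x p * (4 * D + 3 * a * (2 * x + 2 * s + a * p * (6 * s^2 * d^2 / a^2)))) / (a^3 * D^4) * (2 * b^2 * c^2 / a^4) - (pNN s x p / (a^2 * D^3)) * (36 * b * c / a^5)) / (2 * b^2 * c^2 / a^4)^3 = PVI_rhs 0 0 0 (1/2) (s * b^3 / a^3) (x * E^2 / D^2) ((pNN s x p / (a^2 * D^3)) / (2 * b^2 * c^2 / a^4))"
proof -
  note defs = da db dc dd dD dE dG dH dy dxt
  have su: "x * E^2 / D^2 - 1 = y * G^2 / D^2" "x * E^2 / D^2 - s * b^3 / a^3 = xt * H^2 / (D^2 * a^3)" "s * b^3 / a^3 - 1 = c^3 * d / a^3"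
    "x - s^3 * b / a = xt / a" "s^3 * b / a - 1 = c * d^3 / a" "(pNN s x p / (a^2 * D^3)) / (2 * b^2 * c^2 / a^4) = (pNN s x p * a^2 / (2 * D^3 * b^2 * c^2))"
    using Su[OF defs nz] by auto
  have r1: "r = pRN s x p / (2 * b * c * d^3 * s^3 * x * y * xt)"
  proof -
    have "r = (s^3 * b / a * (c * d^3 / a) * (3 * x^2 - 2 * (1 + s^3 * b / a) * x + s^3 * b / a) * p^2 - 2 * x * y * (2 * (s^3 * b / a) * x - (s^3 * b / a)^2 - x) * p + x^2 * y^2) / (2 * x * y * (xt / a) * (s^3 * b / a) * (c * d^3 / a))"
      unfolding hr by (rule A1) (use su nz dy in auto)
    also have "\<dots> = pRN s x p / (2 * b * c * d^3 * s^3 * x * y * xt)" by (rule P2[OF defs nz])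
    finally show ?thesis .
  qed
  have lhs: "(((pNS s x p + pNX s x p * p * (6 * s^2 * d^2 / a^2) + pNP s x p * r * (6 * s^2 * d^2 / a^2)) * a * D - pNN s x p * (4 * D + 3 * a * (2 * x + 2 * s + a * p * (6 * s^2 * d^2 / a^2)))) / (a^3 * D^4) * (2 * b^2 * c^2 / a^4) - (pNN s x p / (a^2 * D^3)) * (36 * b * c / a^5)) / (2 * b^2 * c^2 / a^4)^3 = pLN s x p / (2 * D^4 * b^5 * c^5 * x * y * xt)"
    unfolding Sq2[OF nz r1 P3[OF defs, where p=p]] by (rule Slhs[OF nz P4[OF defs, where p=p]])
  have pP: "(pNN s x p * a^2 / (2 * D^3 * b^2 * c^2)) = (E * G * pNp s x p * a^2 / (2 * D^3 * b^2 * c^2))" using P1[OF defs, where p=p] by simp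
  have "PVI_rhs 0 0 0 (1/2) (s * b^3 / a^3) (x * E^2 / D^2) (E * G * pNp s x p * a^2 / (2 * D^3 * b^2 * c^2)) = ((s * b^3 / a^3) * (c^3 * d / a^3) * (3 * (x * E^2 / D^2)^2 - 2 * (1 + (s * b^3 / a^3)) * (x * E^2 / D^2) + (s * b^3 / a^3)) * (E * G * pNp s x p * a^2 / (2 * D^3 * b^2 * c^2))^2 - 2 * (x * E^2 / D^2) * (y * G^2 / D^2) * (2 * (s * b^3 / a^3) * (x * E^2 / D^2) - (s * b^3 / a^3)^2 - (x * E^2 / D^2)) * (E * G * pNp s x p * a^2 / (2 * D^3 * b^2 * c^2)) + (x * E^2 / D^2)^2 * (y * G^2 / D^2)^2) / (2 * (x * E^2 / D^2) * (y * G^2 / D^2) * (xt * H^2 / (D^2 * a^3)) * (s * b^3 / a^3) * (c^3 * d / a^3))"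
    by (rule A1) (use su nz in auto)
  also have "\<dots> = ((s * b^3 / a^3) * (c^3 * d / a^3) * (pK2 s x p / (D^4 * a^3)) * (E * G * pNp s x p * a^2 / (2 * D^3 * b^2 * c^2))^2 - 2 * (x * E^2 / D^2) * (y * G^2 / D^2) * (pK1 s x p / (D^2 * a^6)) * (E * G * pNp s x p * a^2 / (2 * D^3 * b^2 * c^2)) + (x * E^2 / D^2)^2 * (y * G^2 / D^2)^2) / (2 * (x * E^2 / D^2) * (y * G^2 / D^2) * (xt * H^2 / (D^2 * a^3)) * (s * b^3 / a^3) * (c^3 * d / a^3))"
    by (simp only: SK2[OF nz P5[OF defs, where p=p]] SK1[OF nz P6[OF defs, where p=p]])
  also have "\<dots> = (s * b^3 / a^3) * (c^3 * d / a^3) * (pK2 s x p / (D^4 * a^3)) * (E * G * pNp s x p * a^2 / (2 * D^3 * b^2 * c^2))^2 / (2 * (x * E^2 / D^2) * (y * G^2 / D^2) * (xt * H^2 / (D^2 * a^3)) * (s * b^3 / a^3) * (c^3 * d / a^3)) + (0 - 2 * (x * E^2 / D^2) * (y * G^2 / D^2) * (pK1 s x p / (D^2 * a^6)) * (E * G * pNp s x p * a^2 / (2 * D^3 * b^2 * c^2)) + (x * E^2 / D^2)^2 * (y * G^2 / D^2)^2) / (2 * (x * E^2 / D^2) * (y * G^2 / D^2) * (xt * H^2 / (D^2 * a^3)) * (s * b^3 / a^3) * (c^3 * d / a^3))"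
    by (rule split3)
  also have "\<dots> = pLN s x p / (2 * D^4 * b^5 * c^5 * x * y * xt)"
    unfolding SA[OF nz] SBC[OF nz P7[OF defs, where p=p]] by (rule Sfin[OF nz P8[OF defs, where p=p]])
  finally show ?thesis unfolding lhs su(6) pP by simp
qed


definition T1F :: "complex \<Rightarrow> complex" where "T1F s = 2 * (s + 2)^2 * (s - 1)^2 / (2 * s + 1)^4"
definition T2F :: "complex \<Rightarrow> complex" where "T2F s = 36 * (s + 2) * (s - 1) / (2 * s + 1)^5"
definition t1F :: "complex \<Rightarrow> complex" where "t1F s = 6 * s^2 * (s + 1)^2 / (2 * s + 1)^2"
definition Q1F :: "complex \<Rightarrow> complex \<Rightarrow> complex \<Rightarrow> complex" where
  "Q1F s x p = pNN s x p / ((2 * s + 1)^2 * ((2 * s + 1) * x + s^2)^3)"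
definition Q2F :: "complex \<Rightarrow> complex \<Rightarrow> complex \<Rightarrow> complex \<Rightarrow> complex" where
  "Q2F s x p r = ((pNS s x p + pNX s x p * p * (6 * s^2 * (s + 1)^2 / (2 * s + 1)^2) + pNP s x p * r * (6 * s^2 * (s + 1)^2 / (2 * s + 1)^2)) * (2 * s + 1) * ((2 * s + 1) * x + s^2) - pNN s x p * (4 * ((2 * s + 1) * x + s^2) + 3 * (2 * s + 1) * (2 * x + 2 * s + (2 * s + 1) * p * (6 * s^2 * (s + 1)^2 / (2 * s + 1)^2)))) / ((2 * s + 1)^3 * ((2 * s + 1) * x + s^2)^4)"

lemma Su2:
  fixes s x a b D E G H y xt :: complex
  assumes da: "a = 2 * s + 1" and db: "b = s + 2"
    and dD: "D = (2 * s + 1) * x + s^2" and dE: "E = x + s * (s + 2)" and dG: "G = x - s^2"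
    and dH: "H = s^2 + 2 * s - (2 * s + 1) * x" and dy: "y = x - 1" and dxt: "xt = (2 * s + 1) * x - s^3 * (s + 2)"
    and nz: "a \<noteq> 0" "D \<noteq> 0"
  shows "x * E^2 / D^2 - 1 = y * G^2 / D^2" "x * E^2 / D^2 - s * b^3 / a^3 = xt * H^2 / (D^2 * a^3)"
    "x - s^3 * b / a = xt / a"
  subgoal
    apply (simp add: field_simps nz)
    apply (simp only: da db dD dE dG dH dy dxt)
    apply algebra
    done
  subgoal
    apply (simp add: field_simps nz)
    apply (simp only: da db dD dE dG dH dy dxt)
    apply algebra
    done
  subgoal
    apply (simp add: field_simps nz)
    apply (simp only: da db dD dE dG dH dy dxt)
    apply algebra
    done
  done

lemma pointwise:
  fixes z X P R :: complex
  assumes a: "2 * z + 1 \<noteq> 0" and D: "(2 * z + 1) * X + z^2 \<noteq> 0" and bc: "(z + 2) * (z - 1) \<noteq> 0"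
    and t0: "t_of_s z \<noteq> 0" and t1: "t_of_s z \<noteq> 1" and X0: "X \<noteq> 0" and X1: "X \<noteq> 1" and Xt: "X \<noteq> t_of_s z"
    and Q0: "qt_of z X \<noteq> 0" and Q1: "qt_of z X \<noteq> 1" and QT: "qt_of z X \<noteq> tt_of_s z"
    and hr: "R = PVI_rhs 0 0 0 (1/2) (t_of_s z) X P"
  shows "(Q2F z X P R * T1F z - Q1F z X P * T2F z) / T1F z ^ 3 = PVI_rhs 0 0 0 (1/2) (tt_of_s z) (qt_of z X) (Q1F z X P / T1F z)"
proof -
  have su: "X * (X + z * (z + 2))^2 / ((2 * z + 1) * X + z^2)^2 - 1 = (X - 1) * (X - z^2)^2 / ((2 * z + 1) * X + z^2)^2"
    "X * (X + z * (z + 2))^2 / ((2 * z + 1) * X + z^2)^2 - z * (z + 2)^3 / (2 * z + 1)^3 = ((2 * z + 1) * X - z^3 * (z + 2)) * (z^2 + 2 * z - (2 * z + 1) * X)^2 / (((2 * z + 1) * X + z^2)^2 * (2 * z + 1)^3)"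
    "X - z^3 * (z + 2) / (2 * z + 1) = ((2 * z + 1) * X - z^3 * (z + 2)) / (2 * z + 1)"
    using Su2[OF refl refl refl refl refl refl refl refl a D] by auto
  have z0: "z \<noteq> 0" using t0 unfolding t_of_s_def by auto
  have b0: "z + 2 \<noteq> 0" "z - 1 \<noteq> 0" using bc by auto
  have d0: "z + 1 \<noteq> 0"
  proof
    assume "z + 1 = 0"
    then have "z = -1" by (simp add: add_eq_0_iff2)
    then have "t_of_s z = 1" unfolding t_of_s_def by simp
    with t1 show False by simp
  qed
  have E0: "X + z * (z + 2) \<noteq> 0" using Q0 unfolding qt_of_def by auto
  have G0: "X - z^2 \<noteq> 0" using Q1 su(1) unfolding qt_of_def by auto
  have y0: "X - 1 \<noteq> 0" using X1 by simp
  have xt0: "(2 * z + 1) * X - z^3 * (z + 2) \<noteq> 0" using Xt su(3) a unfolding t_of_s_def by auto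
  have H0: "z^2 + 2 * z - (2 * z + 1) * X \<noteq> 0" using QT su(2) unfolding qt_of_def tt_of_s_def by auto
  show ?thesis
    unfolding Q2F_def Q1F_def T1F_def T2F_def tt_of_s_def qt_of_def
    by (rule key_alg[OF refl refl refl refl refl refl refl refl refl refl a b0 d0 D E0 G0 H0 y0 xt0 z0 X0 hr[unfolded t_of_s_def]])
qed

lemma tder: "2 * s + 1 \<noteq> 0 \<Longrightarrow> (t_of_s has_field_derivative t1F s) (at s)"
  unfolding t_of_s_def[abs_def] t1F_def
  by (auto intro!: derivative_eq_intros simp: field_simps power2_eq_square power3_eq_cube)

lemma ttder: "2 * s + 1 \<noteq> 0 \<Longrightarrow> (tt_of_s has_field_derivative T1F s) (at s)"
  unfolding tt_of_s_def[abs_def] T1F_def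
  apply (auto intro!: derivative_eq_intros)
  apply (simp add: field_simps)
  apply algebra
  done

lemma T1Fder: "2 * s + 1 \<noteq> 0 \<Longrightarrow> (T1F has_field_derivative T2F s) (at s)"
  unfolding T1F_def[abs_def] T2F_def
  apply (auto intro!: derivative_eq_intros)
  apply (simp add: field_simps)
  apply algebra
  done




definition Aa :: "complex \<Rightarrow> complex" where "Aa s = 2 * s + 1"
definition Dd :: "complex \<Rightarrow> complex \<Rightarrow> complex" where "Dd s x = (2 * s + 1) * x + s^2"

lemma Aa_der: "((\<lambda>s. Aa s) has_field_derivative 2) (at z)"
  unfolding Aa_def by (auto intro!: derivative_eq_intros)

lemma Dd_der: "(f has_field_derivative f') (at z) \<Longrightarrow> ((\<lambda>s. Dd s (f s)) has_field_derivative 2 * f z + Aa z * f' + 2 * z) (at z)"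
  unfolding Dd_def Aa_def by (auto intro!: derivative_eq_intros simp: algebra_simps)

lemma qt_alt: "qt_of s x = x * (x + s * (s + 2))^2 / (Dd s x)^2"
  unfolding qt_of_def Dd_def ..

lemma Q1F_alt: "Q1F s x p = pNN s x p / ((Aa s)^2 * (Dd s x)^3)"
  unfolding Q1F_def Dd_def Aa_def ..

lemma t1F_alt: "t1F s = 6 * s^2 * (s + 1)^2 / (Aa s)^2"
  unfolding t1F_def Aa_def ..

lemma Q2F_alt: "Q2F s x p r = ((pNS s x p + pNX s x p * p * (6 * s^2 * (s + 1)^2 / (Aa s)^2) + pNP s x p * r * (6 * s^2 * (s + 1)^2 / (Aa s)^2)) * Aa s * Dd s x - pNN s x p * (4 * Dd s x + 3 * Aa s * (2 * x + 2 * s + Aa s * p * (6 * s^2 * (s + 1)^2 / (Aa s)^2)))) / ((Aa s)^3 * (Dd s x)^4)"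
  unfolding Q2F_def Dd_def Aa_def ..

lemma dNN:
  assumes "(f has_field_derivative f') (at z)" "(h has_field_derivative h') (at z)"
  shows "((\<lambda>s. pNN s (f s) (h s)) has_field_derivative pNS z (f z) (h z) + pNX z (f z) (h z) * f' + pNP z (f z) (h z) * h') (at z)"
  unfolding pNN_def pNS_def pNX_def pNP_def
  apply (rule DERIV_cong)
   apply (auto intro!: derivative_eq_intros assms)[1]
  apply simp
  apply algebra
  done

lemma Qder:
  assumes f: "(f has_field_derivative P * t1F z) (at z)" and a: "Aa z \<noteq> 0" and D: "Dd z (f z) \<noteq> 0"
  shows "((\<lambda>s. qt_of s (f s)) has_field_derivative Q1F z (f z) P) (at z)"
  unfolding qt_alt Q1F_alt
  apply (rule DERIV_cong)
   apply (rule derivative_eq_intros f Dd_der | simp add: D)+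
  unfolding t1F_alt
  apply (simp add: field_simps a D)
  apply (simp only: pNN_def Aa_def Dd_def)
  apply algebra
  done

lemma Q1der:
  assumes f: "(f has_field_derivative P * t1F z) (at z)" and h: "(h has_field_derivative R * t1F z) (at z)"
    and a: "Aa z \<noteq> 0" and D: "Dd z (f z) \<noteq> 0" and hz: "h z = P"
  shows "((\<lambda>s. Q1F s (f s) (h s)) has_field_derivative Q2F z (f z) P R) (at z)"
  unfolding Q1F_alt Q2F_alt
  apply (rule DERIV_cong)
   apply (rule derivative_eq_intros f h dNN[OF f h] Dd_der Aa_der | simp add: D a)+
  unfolding t1F_alt hz
  apply (simp add: field_simps a D)
  apply algebra
  done




lemma open_nz:
  fixes f :: "complex \<Rightarrow> complex"
  assumes "open S" "continuous_on S f" shows "open {s\<in>S. f s \<noteq> 0}"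
proof -
  have "{s\<in>S. f s \<noteq> 0} = S \<inter> f -` (-{0})" by auto
  then show ?thesis using continuous_open_preimage[OF assms(2,1), of "-{0}"] by auto
qed

lemma deriv_via:
  fixes h tt F :: "complex \<Rightarrow> complex"
  assumes "open S" "z \<in> S" "open V" "h holomorphic_on V" "tt z \<in> V"
    "(tt has_field_derivative T') (at z)" "T' \<noteq> 0" "(F has_field_derivative F') (at z)"
    "\<And>s. s \<in> S \<Longrightarrow> h (tt s) = F s"
  shows "deriv h (tt z) = F' / T'"
proof -
  have dh: "(h has_field_derivative deriv h (tt z)) (at (tt z))"
    using holomorphic_derivI[OF assms(4,3,5)] .
  have "((\<lambda>s. h (tt s)) has_field_derivative deriv h (tt z) * T') (at z)"
    using DERIV_chain2[OF dh assms(6)] .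
  then have "(F has_field_derivative deriv h (tt z) * T') (at z)"
    by (rule has_field_derivative_transform_within_open[OF _ assms(1,2)]) (use assms(9) in auto)
  then have "deriv h (tt z) * T' = F'" using DERIV_unique assms(8) by blast
  then show ?thesis using assms(7) by (simp add: field_simps)
qed

theorem theorem1p4:
  fixes q :: "complex \<Rightarrow> complex" and U :: "complex set" and s0 :: complex
  assumes sol: "Picard_solution_on q U"
    and s0U: "t_of_s s0 \<in> U"
    and s0_ne: "2 * s0 + 1 \<noteq> 0"
    and den_ne: "(2 * s0 + 1) * q (t_of_s s0) + s0^2 \<noteq> 0"
    and dtt_ne: "deriv tt_of_s s0 \<noteq> 0"
    and tt_ne: "tt_of_s s0 \<noteq> 0" "tt_of_s s0 \<noteq> 1"
    and qt_ne: "qt_of s0 (q (t_of_s s0)) \<noteq> 0" "qt_of s0 (q (t_of_s s0)) \<noteq> 1"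
               "qt_of s0 (q (t_of_s s0)) \<noteq> tt_of_s s0"
  shows "\<exists>S g. open S \<and> s0 \<in> S \<and> Picard_solution_on g (tt_of_s ` S) \<and>
           (\<forall>s\<in>S. t_of_s s \<in> U \<and> g (tt_of_s s) = qt_of s (q (t_of_s s)))"
proof -
  have oU: "open U" and holq: "q holomorphic_on U"
    and solU: "\<And>t. t \<in> U \<Longrightarrow> t \<noteq> 0 \<and> t \<noteq> 1 \<and> q t \<noteq> 0 \<and> q t \<noteq> 1 \<and> q t \<noteq> t \<and>
        deriv (deriv q) t = PVI_rhs 0 0 0 (1/2) t (q t) (deriv q t)"
    using sol unfolding PVI_solution_on_def by auto
  have holq': "deriv q holomorphic_on U" by (rule holomorphic_deriv[OF holq oU])
  define A where "A = {s::complex \<in> UNIV. Aa s \<noteq> 0}"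
  have oA: "open A"
    unfolding A_def by (rule open_nz[OF open_UNIV]) (unfold Aa_def[abs_def]; intro continuous_intros)
  have thol: "t_of_s holomorphic_on A"
    unfolding t_of_s_def[abs_def] A_def Aa_def by (auto intro!: holomorphic_intros)
  have tthol: "tt_of_s holomorphic_on A"
    unfolding tt_of_s_def[abs_def] A_def Aa_def by (auto intro!: holomorphic_intros)
  define W0 where "W0 = A \<inter> t_of_s -` U"
  have oW0: "open W0"
    unfolding W0_def by (rule continuous_open_preimage[OF holomorphic_on_imp_continuous_on[OF thol] oA oU])
  have W0A: "W0 \<subseteq> A" and W0U: "\<And>s. s \<in> W0 \<Longrightarrow> t_of_s s \<in> U" unfolding W0_def by auto
  define q0 where "q0 = (\<lambda>s. q (t_of_s s))"
  define q1 where "q1 = (\<lambda>s. deriv q (t_of_s s))"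
  have hq0: "q0 holomorphic_on W0"
  proof -
    have "(q \<circ> t_of_s) holomorphic_on W0"
      by (rule holomorphic_on_compose_gen[OF holomorphic_on_subset[OF thol W0A] holq]) (use W0U in auto)
    then show ?thesis by (simp add: q0_def o_def)
  qed
  have cq0: "continuous_on W0 q0" by (rule holomorphic_on_imp_continuous_on[OF hq0])
  define W1 where "W1 = {s \<in> W0. Dd s (q0 s) \<noteq> 0}"
  have oW1: "open W1"
    unfolding W1_def by (rule open_nz[OF oW0]) (unfold Dd_def; intro continuous_intros cq0)
  have W10: "W1 \<subseteq> W0" unfolding W1_def by auto
  define Qf where "Qf = (\<lambda>s. qt_of s (q0 s))"
  have hQf: "Qf holomorphic_on W1"
    unfolding Qf_def qt_of_def
    by (auto intro!: holomorphic_intros holomorphic_on_subset[OF hq0] simp: W1_def Dd_def)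
  have cQf: "continuous_on W1 Qf" by (rule holomorphic_on_imp_continuous_on[OF hQf])
  have ctt: "continuous_on W1 tt_of_s"
    by (rule holomorphic_on_imp_continuous_on[OF holomorphic_on_subset[OF tthol]]) (use W10 W0A in auto)
  define W where "W = {s \<in> W1. (s + 2) * (s - 1) \<noteq> 0} \<inter> {s\<in>W1. tt_of_s s \<noteq> 0} \<inter> {s\<in>W1. tt_of_s s - 1 \<noteq> 0}
     \<inter> {s\<in>W1. Qf s \<noteq> 0} \<inter> {s\<in>W1. Qf s - 1 \<noteq> 0} \<inter> {s\<in>W1. Qf s - tt_of_s s \<noteq> 0}"
  have oW: "open W"
    unfolding W_def
    by (intro open_Int open_nz[OF oW1] continuous_intros cQf ctt)
  have WW1: "W \<subseteq> W1" unfolding W_def by auto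
  have memW: "z \<in> W \<Longrightarrow> Aa z \<noteq> 0 \<and> t_of_s z \<in> U \<and> Dd z (q0 z) \<noteq> 0 \<and> (z + 2) * (z - 1) \<noteq> 0 \<and>
      tt_of_s z \<noteq> 0 \<and> tt_of_s z \<noteq> 1 \<and> Qf z \<noteq> 0 \<and> Qf z \<noteq> 1 \<and> Qf z \<noteq> tt_of_s z" for z
    unfolding W_def W1_def W0_def A_def by auto
  have ttd: "Aa z \<noteq> 0 \<Longrightarrow> (tt_of_s has_field_derivative T1F z) (at z)" for z
    using ttder unfolding Aa_def by blast
  have s0W: "s0 \<in> W"
  proof -
    have a0: "Aa s0 \<noteq> 0" using s0_ne unfolding Aa_def .
    have "T1F s0 \<noteq> 0" using dtt_ne DERIV_imp_deriv[OF ttd[OF a0]] by simp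
    then have "(s0 + 2) * (s0 - 1) \<noteq> 0" unfolding T1F_def by auto
    moreover have "s0 \<in> W1" unfolding W1_def W0_def A_def using a0 s0U den_ne by (simp add: Dd_def q0_def)
    moreover have "Qf s0 = qt_of s0 (q (t_of_s s0))" unfolding Qf_def q0_def ..
    ultimately show ?thesis unfolding W_def using tt_ne qt_ne by auto
  qed
  have ttholW: "tt_of_s holomorphic_on W"
    by (rule holomorphic_on_subset[OF tthol]) (use WW1 W10 W0A in auto)
  obtain r where r: "r > 0" "ball s0 r \<subseteq> W" "inj_on tt_of_s (ball s0 r)"
    using has_complex_derivative_locally_injective[OF ttholW s0W oW dtt_ne] by blast
  define S where "S = ball s0 r"
  have oS: "open S" and s0S: "s0 \<in> S" and SW: "S \<subseteq> W" and injS: "inj_on tt_of_s S"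
    using r unfolding S_def by auto
  have ttholS: "tt_of_s holomorphic_on S" by (rule holomorphic_on_subset[OF ttholW SW])
  obtain \<sigma> where \<sigma>hol: "\<sigma> holomorphic_on tt_of_s ` S" and \<sigma>inv: "\<And>z. z \<in> S \<Longrightarrow> \<sigma> (tt_of_s z) = z"
    using holomorphic_has_inverse[OF ttholS oS injS] by metis
  define V where "V = tt_of_s ` S"
  have oV: "open V" unfolding V_def by (rule open_mapping_thm3[OF ttholS oS injS])
  define g where "g = Qf \<circ> \<sigma>"
  have ghol: "g holomorphic_on V"
    unfolding g_def V_def
    by (rule holomorphic_on_compose_gen[OF \<sigma>hol holomorphic_on_subset[OF hQf]]) (use SW WW1 \<sigma>inv in auto)
  have gtt: "\<And>s. s \<in> S \<Longrightarrow> g (tt_of_s s) = Qf s" by (simp add: g_def \<sigma>inv)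
  have ttV: "\<And>s. s \<in> S \<Longrightarrow> tt_of_s s \<in> V" unfolding V_def by auto
  have facts: "Aa z \<noteq> 0 \<and> t_of_s z \<in> U \<and> Dd z (q0 z) \<noteq> 0 \<and> T1F z \<noteq> 0" if "z \<in> S" for z
  proof -
    have m: "Aa z \<noteq> 0 \<and> t_of_s z \<in> U \<and> Dd z (q0 z) \<noteq> 0 \<and> (z + 2) * (z - 1) \<noteq> 0" using memW that SW by blast
    then have "T1F z \<noteq> 0" unfolding T1F_def Aa_def by auto
    with m show ?thesis by blast
  qed
  have dq0: "(q0 has_field_derivative q1 z * t1F z) (at z)" if "z \<in> S" for z
  proof -
    have "Aa z \<noteq> 0" "t_of_s z \<in> U" using facts[OF that] by auto
    then show ?thesis unfolding q0_def q1_def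
      using DERIV_chain2[OF holomorphic_derivI[OF holq oU] tder] by (auto simp: Aa_def)
  qed
  have dq1: "(q1 has_field_derivative deriv (deriv q) (t_of_s z) * t1F z) (at z)" if "z \<in> S" for z
  proof -
    have "Aa z \<noteq> 0" "t_of_s z \<in> U" using facts[OF that] by auto
    then show ?thesis unfolding q1_def
      using DERIV_chain2[OF holomorphic_derivI[OF holq' oU] tder] by (auto simp: Aa_def)
  qed
  have dQ: "(Qf has_field_derivative Q1F z (q0 z) (q1 z)) (at z)" if "z \<in> S" for z
    unfolding Qf_def by (rule Qder[OF dq0[OF that]]) (use facts[OF that] in auto)
  have dQ1: "((\<lambda>s. Q1F s (q0 s) (q1 s)) has_field_derivative Q2F z (q0 z) (q1 z) (deriv (deriv q) (t_of_s z))) (at z)" if "z \<in> S" for z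
    by (rule Q1der[OF dq0[OF that] dq1[OF that]]) (use facts[OF that] in auto)
  have dg: "deriv g (tt_of_s z) = Q1F z (q0 z) (q1 z) / T1F z" if "z \<in> S" for z
  proof -
    have aZ: "Aa z \<noteq> 0" "T1F z \<noteq> 0" using facts[OF that] by auto
    show ?thesis by (rule deriv_via[OF oS that oV ghol ttV[OF that] ttd[OF aZ(1)] aZ(2) dQ[OF that] gtt])
  qed
  have dgg: "deriv (deriv g) (tt_of_s z) = (Q2F z (q0 z) (q1 z) (deriv (deriv q) (t_of_s z)) * T1F z - Q1F z (q0 z) (q1 z) * T2F z) / (T1F z * T1F z) / T1F z" if "z \<in> S" for z
  proof -
    have aZ: "Aa z \<noteq> 0" "T1F z \<noteq> 0" using facts[OF that] by auto
    have a2: "2 * z + 1 \<noteq> 0" using aZ(1) unfolding Aa_def .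
    have dF: "((\<lambda>s. Q1F s (q0 s) (q1 s) / T1F s) has_field_derivative (Q2F z (q0 z) (q1 z) (deriv (deriv q) (t_of_s z)) * T1F z - Q1F z (q0 z) (q1 z) * T2F z) / (T1F z * T1F z)) (at z)"
      by (rule DERIV_divide[OF dQ1[OF that] T1Fder[OF a2] aZ(2)])
    have eq: "deriv g (tt_of_s s) = Q1F s (q0 s) (q1 s) / T1F s" if "s \<in> S" for s using dg[OF that] .
    show ?thesis
      by (rule deriv_via[OF oS that oV holomorphic_deriv[OF ghol oV] ttV[OF that] ttd[OF aZ(1)] aZ(2) dF eq])
  qed
  have Pic: "Picard_solution_on g V"
  proof -
   have "\<forall>w\<in>V. w \<noteq> 0 \<and> w \<noteq> 1 \<and> g w \<noteq> 0 \<and> g w \<noteq> 1 \<and> g w \<noteq> w \<and>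
        deriv (deriv g) w = PVI_rhs 0 0 0 (1/2) w (g w) (deriv g w)"
   proof
    fix w assume "w \<in> V"
    then obtain z where z: "z \<in> S" and w: "w = tt_of_s z" unfolding V_def by auto
    have m: "Aa z \<noteq> 0 \<and> t_of_s z \<in> U \<and> Dd z (q0 z) \<noteq> 0 \<and> (z + 2) * (z - 1) \<noteq> 0 \<and>
      tt_of_s z \<noteq> 0 \<and> tt_of_s z \<noteq> 1 \<and> Qf z \<noteq> 0 \<and> Qf z \<noteq> 1 \<and> Qf z \<noteq> tt_of_s z"
      using memW z SW by blast
    have su: "t_of_s z \<noteq> 0 \<and> t_of_s z \<noteq> 1 \<and> q0 z \<noteq> 0 \<and> q0 z \<noteq> 1 \<and> q0 z \<noteq> t_of_s z \<and>
        deriv (deriv q) (t_of_s z) = PVI_rhs 0 0 0 (1/2) (t_of_s z) (q0 z) (q1 z)"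
      using solU[of "t_of_s z"] m unfolding q0_def q1_def by auto
    have gw: "g w = qt_of z (q0 z)" unfolding w gtt[OF z] Qf_def ..
    have pw: "(Q2F z (q0 z) (q1 z) (deriv (deriv q) (t_of_s z)) * T1F z - Q1F z (q0 z) (q1 z) * T2F z) / T1F z ^ 3
        = PVI_rhs 0 0 0 (1/2) (tt_of_s z) (qt_of z (q0 z)) (Q1F z (q0 z) (q1 z) / T1F z)"
      by (rule pointwise) (use m su in \<open>auto simp: Aa_def Dd_def Qf_def\<close>)
    show "w \<noteq> 0 \<and> w \<noteq> 1 \<and> g w \<noteq> 0 \<and> g w \<noteq> 1 \<and> g w \<noteq> w \<and>
        deriv (deriv g) w = PVI_rhs 0 0 0 (1/2) w (g w) (deriv g w)"
    proof (intro conjI)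
      show "w \<noteq> 0" "w \<noteq> 1" using m w by auto
      show "g w \<noteq> 0" "g w \<noteq> 1" "g w \<noteq> w" using m w gw unfolding Qf_def by auto
      show "deriv (deriv g) w = PVI_rhs 0 0 0 (1/2) w (g w) (deriv g w)"
        unfolding w dgg[OF z] dg[OF z] gw[unfolded w] pw[symmetric]
        by (simp add: power3_eq_cube)
    qed
   qed
   then show ?thesis unfolding PVI_solution_on_def by (rule conjI[OF oV conjI[OF ghol]])
  qed
  show ?thesis
  proof (intro exI conjI ballI)
    show "open S" "s0 \<in> S" by (fact oS, fact s0S)
    show "Picard_solution_on g (tt_of_s ` S)" using Pic unfolding V_def .
    fix s assume "s \<in> S"
    then show "t_of_s s \<in> U" using facts by blast
    show "g (tt_of_s s) = qt_of s (q (t_of_s s))" using gtt[OF \<open>s \<in> S\<close>] unfolding Qf_def q0_def .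
  qed
qed


end
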